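(* In the iAPG setting described in the context, for every $k\ge0$, $$F(x^{(k+1)})-F^*+\frac{\gamma_{k+1}}{2}\|x^*-z^{(k+1)}\|^2\le(1-\alpha_k)\Big[F(x^{(k)})-F^*+\frac{\gamma_k}{2}\|x^*-z^{(k)}\|^2\Big]+\varepsilon_k\alpha_k\|x^*-z^{(k+1)}\|.$$
   Context: iAPG setting. Let $g,h:\mathbb R^n\to\mathbb R$ and $r:\mathbb R^n\to\mathbb R\cup\{+\infty\}$, where $g$ is convex, $\mu$-strongly convex for some $\mu\ge0$, and differentiable with $L_g$-Lipschitz gradient ($L_g>0$); $h$ is convex and differentiable with $L_h$-Lipschitz gradient; $r$ is proper, closed and convex. Put $H=h+r$, $F=g+H$, and assume $F$ attains its minimum value $F^*$ at some point $x^*$. Fix constants $\gamma_{\mathrm{dec}}\in(0,1)$ and $\underline L>0$ with $\mu\le\underline L\le L_g$. We consider points $x^{(k)},z^{(k)},y^{(k)}\in\mathbb R^n$ and scalars $\eta_k>0,\alpha_k>0,\gamma_k>0,\varepsilon_k\ge0$ ($k\ge0$) such that $x^{(0)}=z^{(0)}\in\mathrm{dom}(H)$, $\gamma_0\ge\mu$, and for every $k\ge0$: (i) $\gamma_{\mathrm{dec}}/L_g<\eta_k\le1/\underline L$; (ii) $\gamma_{k+1}=\alpha_k^2/\eta_k=(1-\alpha_k)\gamma_k+\alpha_k\mu$; (iii) $y^{(k)}=\frac{1}{\alpha_k\gamma_k+\gamma_{k+1}}\big(\alpha_k\gamma_k z^{(k)}+\gamma_{k+1}x^{(k)}\big)$;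 (iv) $\mathrm{dist}\big(0,\ \nabla g(y^{(k)})+\tfrac1{\eta_k}(x^{(k+1)}-y^{(k)})+\partial H(x^{(k+1)})\big)\le\varepsilon_k$; (v) $g(x^{(k+1)})\le g(y^{(k)})+\langle\nabla g(y^{(k)}),x^{(k+1)}-y^{(k)}\rangle+\frac1{2\eta_k}\|x^{(k+1)}-y^{(k)}\|^2$; (vi) $z^{(k+1)}=x^{(k)}+\frac1{\alpha_k}(x^{(k+1)}-x^{(k)})$. Here $\partial$ denotes the convex subdifferential and $\mathrm{dist}(0,S)=\inf_{s\in S}\|s\|$. *)

theory Defs
  imports "HOL-Analysis.Analysis" "HOL-Library.Extended_Real"
begin

definition proper_fun :: "('a \<Rightarrow> ereal) \<Rightarrow> bool" where
  "proper_fun f \<longleftrightarrow> (\<forall>x. f x \<noteq> -\<infinity>) \<and> (\<exists>x. f x < \<infinity>)"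

definition ext_dom :: "('a \<Rightarrow> ereal) \<Rightarrow> 'a set" where
  "ext_dom f = {x. f x < \<infinity>}"

definition closed_fun :: "('a::topological_space \<Rightarrow> ereal) \<Rightarrow> bool" where
  "closed_fun f \<longleftrightarrow> closed {(x, t::real). f x \<le> ereal t}"

definition convex_fun :: "('a::real_vector \<Rightarrow> ereal) \<Rightarrow> bool" where
  "convex_fun f \<longleftrightarrow> convex {(x, t::real). f x \<le> ereal t}"

definition subdiff :: "('a::real_inner \<Rightarrow> ereal) \<Rightarrow> 'a \<Rightarrow> 'a set" where
  "subdiff f x = (if \<bar>f x\<bar> = \<infinity> then {}
     else {s. \<forall>y. f y \<ge> f x + ereal (inner s (y - x))})"

definition strongly_convex :: "real \<Rightarrow> ('a::real_inner \<Rightarrow> real) \<Rightarrow> bool" where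
  "strongly_convex \<mu> g \<longleftrightarrow> convex_on UNIV (\<lambda>x. g x - \<mu> / 2 * (norm x)\<^sup>2)"

text \<open>Distance from 0 to a set is at most eps (the distance to the empty set is +infinity).\<close>
definition dist0_le :: "'a::real_normed_vector set \<Rightarrow> real \<Rightarrow> bool" where
  "dist0_le S \<epsilon> \<longleftrightarrow> S \<noteq> {} \<and> infdist 0 S \<le> \<epsilon>"

end

theory Submission
  imports Defs
begin


lemma quad:
  fixes X Z W :: "'a::real_inner" and \<alpha> \<gamma> \<mu> gp :: real
  assumes a: "0 < \<alpha>" "\<alpha> \<le> 1" and g: "\<gamma> > 0" and m: "\<mu> \<ge> 0"
    and gp: "gp = (1-\<alpha>)*\<gamma> + \<alpha>*\<mu>"
  shows "(gp/\<alpha>) * inner (((1-\<alpha>) *\<^sub>R X + \<alpha> *\<^sub>R W) - (1/(\<alpha>*\<gamma> + gp)) *\<^sub>R ((\<alpha>*\<gamma>) *\<^sub>R Z + gp *\<^sub>R X)) (- W)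
    + gp/(2*\<alpha>^2) * (norm (((1-\<alpha>) *\<^sub>R X + \<alpha> *\<^sub>R W) - (1/(\<alpha>*\<gamma> + gp)) *\<^sub>R ((\<alpha>*\<gamma>) *\<^sub>R Z + gp *\<^sub>R X)))\<^sup>2
    - \<alpha>*\<mu>/2 * (norm ((1/(\<alpha>*\<gamma> + gp)) *\<^sub>R ((\<alpha>*\<gamma>) *\<^sub>R Z + gp *\<^sub>R X)))\<^sup>2 + gp/2 * (norm W)\<^sup>2
    \<le> (1-\<alpha>)*\<gamma>/2 * (norm Z)\<^sup>2"
proof -
  define S where "S = \<gamma> + \<alpha>*\<mu>"
  have S: "\<alpha>*\<gamma> + gp = S" using gp by (simp add: S_def algebra_simps)
  have Sp: "S > 0" using a g m S_def by (smt (verit) mult_nonneg_nonneg)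
  define Y where "Y = (1/S) *\<^sub>R ((\<alpha>*\<gamma>) *\<^sub>R Z + gp *\<^sub>R X)"
  have gen: "(gp/\<alpha>) * inner (A + \<alpha> *\<^sub>R W) (- W)
    + gp/(2*\<alpha>^2) * (norm (A + \<alpha> *\<^sub>R W))\<^sup>2 + gp/2 * (norm W)\<^sup>2
    = gp/(2*\<alpha>^2) * (norm A)\<^sup>2" for A
  proof -
    have h1: "(norm (A + \<alpha> *\<^sub>R W))\<^sup>2 = (norm A)\<^sup>2 + 2*\<alpha>*inner A W + \<alpha>^2 * (norm W)\<^sup>2"
      unfolding power2_norm_eq_inner by (simp add: inner_add_left inner_add_right inner_commute power2_eq_square algebra_simps)
    have h2: "inner (A + \<alpha> *\<^sub>R W) (- W) = - inner A W - \<alpha> * (norm W)\<^sup>2"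
      by (simp add: power2_norm_eq_inner inner_add_left)
    have "(gp/\<alpha>) * inner (A + \<alpha> *\<^sub>R W) (- W)
    + gp/(2*\<alpha>^2) * (norm (A + \<alpha> *\<^sub>R W))\<^sup>2 + gp/2 * (norm W)\<^sup>2 = 
      (gp/\<alpha>) * (- inner A W - \<alpha> * (norm W)\<^sup>2) + gp/(2*\<alpha>^2) * ((norm A)\<^sup>2 + 2*\<alpha>*inner A W + \<alpha>^2 * (norm W)\<^sup>2) + gp/2 * (norm W)\<^sup>2"
      by (simp only: h1 h2)
    also have "\<dots> = gp/(2*\<alpha>^2) * (norm A)\<^sup>2" using a by (simp add: field_simps power2_eq_square)
    finally show ?thesis .
  qed
  have e1: "(gp/\<alpha>) * inner (((1-\<alpha>) *\<^sub>R X + \<alpha> *\<^sub>R W) - Y) (- W)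
    + gp/(2*\<alpha>^2) * (norm (((1-\<alpha>) *\<^sub>R X + \<alpha> *\<^sub>R W) - Y))\<^sup>2 + gp/2 * (norm W)\<^sup>2
    = gp/(2*\<alpha>^2) * (norm ((1-\<alpha>) *\<^sub>R X - Y))\<^sup>2"
    using gen[of "(1-\<alpha>) *\<^sub>R X - Y"] by (simp add: algebra_simps)
  have e2a: "(1-\<alpha>) *\<^sub>R X - Y = ((1-\<alpha>) - gp/S) *\<^sub>R X - (\<alpha>*\<gamma>/S) *\<^sub>R Z"
    unfolding Y_def by (simp add: algebra_simps scaleR_add_right)
  have c1: "(1-\<alpha>) - gp/S = -\<alpha>/S * (\<alpha>*\<mu>)" using Sp unfolding S_def gp by (simp add: field_simps)
  have c2: "\<alpha>*\<gamma>/S = \<alpha>/S * \<gamma>" by simp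
  have e2: "(1-\<alpha>) *\<^sub>R X - Y = (-\<alpha>/S) *\<^sub>R ((\<alpha>*\<mu>) *\<^sub>R X + \<gamma> *\<^sub>R Z)"
    unfolding e2a c1 c2 by (simp add: algebra_simps)
  define xx where "xx = inner X X"
  define xz where "xz = inner X Z"
  define zz where "zz = inner Z Z"
  have n1: "(norm ((1-\<alpha>) *\<^sub>R X - Y))\<^sup>2 = (\<alpha>/S)^2 * ((\<alpha>*\<mu>)^2*xx + 2*(\<alpha>*\<mu>)*\<gamma>*xz + \<gamma>^2*zz)"
    unfolding e2 power2_norm_eq_inner xx_def xz_def zz_def
    by (simp add: inner_add_left inner_add_right inner_commute power2_eq_square algebra_simps)
  have n2: "(norm Y)\<^sup>2 = (1/S)^2 * ((\<alpha>*\<gamma>)^2*zz + 2*(\<alpha>*\<gamma>)*gp*xz + gp^2*xx)"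
    unfolding Y_def power2_norm_eq_inner xx_def xz_def zz_def
    by (simp add: inner_add_left inner_add_right inner_commute power2_eq_square algebra_simps)
  have n3: "(norm Z)\<^sup>2 = zz" unfolding zz_def power2_norm_eq_inner ..
  have n4: "xx - 2*xz + zz \<ge> 0"
  proof -
    have "0 \<le> inner (X - Z) (X - Z)" by simp
    then show ?thesis unfolding xx_def xz_def zz_def by (simp add: inner_diff_left inner_diff_right inner_commute)
  qed
  have key: "(1-\<alpha>)*\<gamma>/2 * zz - (gp/(2*\<alpha>^2) * ((\<alpha>/S)^2 * ((\<alpha>*\<mu>)^2*xx + 2*(\<alpha>*\<mu>)*\<gamma>*xz + \<gamma>^2*zz))
     - \<alpha>*\<mu>/2 * ((1/S)^2 * ((\<alpha>*\<gamma>)^2*zz + 2*(\<alpha>*\<gamma>)*gp*xz + gp^2*xx)))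
     = (\<alpha>*\<mu>*gp*(1-\<alpha>)*\<gamma>)/(2*S^2) * (xx - 2*xz + zz)"
    using Sp a unfolding S_def gp by (simp add: field_simps) algebra
  have "0 \<le> (\<alpha>*\<mu>*gp*(1-\<alpha>)*\<gamma>)/(2*S^2) * (xx - 2*xz + zz)"
    using a g m n4 gp Sp by (intro mult_nonneg_nonneg divide_nonneg_pos) (auto intro!: mult_nonneg_nonneg add_nonneg_nonneg)
  then have fin: "gp/(2*\<alpha>^2) * (norm ((1-\<alpha>) *\<^sub>R X - Y))\<^sup>2 - \<alpha>*\<mu>/2 * (norm Y)\<^sup>2 \<le> (1-\<alpha>)*\<gamma>/2 * (norm Z)\<^sup>2"
    unfolding n1 n2 n3 using key by linarith
  show ?thesis using fin e1 unfolding Y_def S by linarith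
qed


lemma grad_ineq:
  fixes \<phi> :: "'a::real_normed_vector \<Rightarrow> real"
  assumes conv: "convex_on UNIV \<phi>" and der: "(\<phi> has_derivative D) (at y)"
  shows "\<phi> y + D (a - y) \<le> \<phi> a"
proof -
  define d where "d = a - y"
  have lin: "linear D" using der has_derivative_linear by blast
  have d1: "((\<lambda>t::real. y + t *\<^sub>R d) has_derivative (\<lambda>t. t *\<^sub>R d)) (at 0)"
    by (auto intro!: derivative_eq_intros)
  have d2: "(\<phi> has_derivative D) (at (y + (0::real) *\<^sub>R d))" using der by simp
  have "((\<lambda>t. \<phi> (y + t *\<^sub>R d)) has_derivative (\<lambda>t. D (t *\<^sub>R d))) (at 0)"
    using has_derivative_compose[OF d1 d2] .
  moreover have "(\<lambda>t. D (t *\<^sub>R d)) = (\<lambda>t. D d * t)"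
    using lin by (auto simp: linear_scale)
  ultimately have "((\<lambda>t. \<phi> (y + t *\<^sub>R d)) has_field_derivative D d) (at 0)"
    by (simp add: has_field_derivative_def)
  then have "((\<lambda>t. \<phi> (y + t *\<^sub>R d)) has_field_derivative D d) (at 0 within {0<..})"
    by (rule has_field_derivative_at_within)
  then have lim: "((\<lambda>t. (\<phi> (y + t *\<^sub>R d) - \<phi> y) / t) \<longlongrightarrow> D d) (at_right 0)"
    by (simp add: has_field_derivative_iff)
  have ev: "eventually (\<lambda>t. \<phi> a - \<phi> y \<ge> (\<phi> (y + t *\<^sub>R d) - \<phi> y) / t) (at_right (0::real))"
    using eventually_at_right_real[of 0 1, OF zero_less_one]
  proof (rule eventually_mono)
    fix t :: real assume t: "t \<in> {0<..<1}"
    have "\<phi> ((1 - t) *\<^sub>R y + t *\<^sub>R a) \<le> (1 - t) * \<phi> y + t * \<phi> a"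
      using convex_onD[OF conv, of t y a] t by auto
    moreover have "(1 - t) *\<^sub>R y + t *\<^sub>R a = y + t *\<^sub>R d" by (simp add: d_def algebra_simps)
    ultimately have "\<phi> (y + t *\<^sub>R d) - \<phi> y \<le> t * (\<phi> a - \<phi> y)" by (simp add: algebra_simps)
    then show "\<phi> a - \<phi> y \<ge> (\<phi> (y + t *\<^sub>R d) - \<phi> y) / t" using t by (simp add: divide_le_eq mult.commute)
  qed
  have "D d \<le> \<phi> a - \<phi> y"
    by (rule tendsto_upperbound[OF lim ev]) (simp add: trivial_limit_at_right_real)
  then show ?thesis by (simp add: d_def)
qed

lemma strong_grad:
  fixes g :: "'a::real_inner \<Rightarrow> real"
  assumes conv: "convex_on UNIV (\<lambda>x. g x - \<mu> / 2 * (norm x)\<^sup>2)"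
    and der: "\<And>u. (g has_derivative (\<lambda>v. inner (g' u) v)) (at u)"
  shows "g y + inner (g' y) (a - y) + \<mu>/2 * (norm (a - y))\<^sup>2 \<le> g a"
proof -
  have dn: "((\<lambda>x. \<mu> / 2 * (norm x)\<^sup>2) has_derivative (\<lambda>v. \<mu> * inner y v)) (at y)"
  proof -
    have "((\<lambda>x. \<mu> / 2 * inner x x) has_derivative (\<lambda>v. \<mu> / 2 * (inner y v + inner v y))) (at y)"
      by (auto intro!: derivative_eq_intros)
    moreover have "(\<lambda>v. \<mu> / 2 * (inner y v + inner v y)) = (\<lambda>v. \<mu> * inner y v)"
      by (auto simp: inner_commute)
    ultimately show ?thesis by (simp add: power2_norm_eq_inner)
  qed
  have "((\<lambda>x. g x - \<mu> / 2 * (norm x)\<^sup>2) has_derivative (\<lambda>v. inner (g' y) v - \<mu> * inner y v)) (at y)"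
    by (rule has_derivative_diff[OF der dn])
  from grad_ineq[OF conv this, of a]
  have "g y - \<mu> / 2 * (norm y)\<^sup>2 + (inner (g' y) (a - y) - \<mu> * inner y (a - y)) \<le> g a - \<mu> / 2 * (norm a)\<^sup>2" .
  moreover have "(norm (a - y))\<^sup>2 = (norm a)\<^sup>2 - 2 * inner y a + (norm y)\<^sup>2"
    unfolding power2_norm_eq_inner by (simp add: inner_diff_left inner_diff_right inner_commute)
  then have "\<mu>/2 * (norm (a - y))\<^sup>2 = \<mu>/2 * (norm a)\<^sup>2 - \<mu> * inner y a + \<mu>/2 * (norm y)\<^sup>2"
    by (simp only:) (simp add: algebra_simps)
  moreover have "\<mu> * inner y (a - y) = \<mu> * inner y a - \<mu> * (norm y)\<^sup>2"
    unfolding power2_norm_eq_inner by (simp add: inner_diff_right algebra_simps)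
  moreover have "inner (g' y) (a - y) = inner (g' y) a - inner (g' y) y" by (simp add: inner_diff_right)
  ultimately show ?thesis by linarith
qed


lemma core:
  fixes x z xp w y a q v :: "'a::real_inner"
  assumes a: "0 < \<alpha>" "\<alpha> \<le> 1" and g: "\<gamma> > 0" and m: "\<mu> \<ge> 0" and eta: "\<eta> > 0"
    and gp: "\<alpha>^2/\<eta> = (1-\<alpha>)*\<gamma> + \<alpha>*\<mu>"
    and ydef: "y = (1 / (\<alpha> * \<gamma> + \<alpha>^2/\<eta>)) *\<^sub>R ((\<alpha> * \<gamma>) *\<^sub>R z + (\<alpha>^2/\<eta>) *\<^sub>R x)"
    and wdef: "w = x + (1 / \<alpha>) *\<^sub>R (xp - x)"
    and gx: "gy + inner q (x - y) \<le> gx"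
    and ga: "gy + inner q (a - y) + \<mu>/2 * (norm (a - y))\<^sup>2 \<le> ga"
    and gxp: "gxp \<le> gy + inner q (xp - y) + 1 / (2 * \<eta>) * (norm (xp - y))\<^sup>2"
    and Hx: "Hp + inner v (x - xp) \<le> Hx"
    and Ha: "Hp + inner v (a - xp) \<le> Ha"
    and e: "norm (q + (1 / \<eta>) *\<^sub>R (xp - y) + v) \<le> \<epsilon>"
  shows "gxp + Hp - (ga + Ha) + (\<alpha>^2/\<eta>) / 2 * (norm (a - w))\<^sup>2
    \<le> (1 - \<alpha>) * (gx + Hx - (ga + Ha) + \<gamma> / 2 * (norm (a - z))\<^sup>2) + \<epsilon> * \<alpha> * norm (a - w)"
proof -
  define gp' where "gp' = \<alpha>^2/\<eta>"
  define E where "E = q + (1 / \<eta>) *\<^sub>R (xp - y) + v"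
  have xp: "xp = (1-\<alpha>) *\<^sub>R x + \<alpha> *\<^sub>R w"
    using a unfolding wdef by (simp add: algebra_simps)
  have iq: "(1-\<alpha>) * inner q (x - y) + \<alpha> * inner q (a - y) - inner q (xp - y) = \<alpha> * inner q (a - w)"
    unfolding xp by (simp add: inner_diff_right inner_add_right algebra_simps)
  have iv: "(1-\<alpha>) * inner v (x - xp) + \<alpha> * inner v (a - xp) = \<alpha> * inner v (a - w)"
    unfolding xp by (simp add: inner_diff_right inner_add_right algebra_simps)
  have qv: "inner q (a - w) + inner v (a - w) = inner E (a - w) - (1/\<eta>) * inner (xp - y) (a - w)"
    unfolding E_def by (simp add: inner_add_left)
  have cs: "- inner E (a - w) \<le> \<epsilon> * norm (a - w)"
  proof -
    have "- inner E (a - w) \<le> norm E * norm (a - w)"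
      using Cauchy_Schwarz_ineq2[of E "a - w"] by (simp add: abs_le_iff)
    also have "\<dots> \<le> \<epsilon> * norm (a - w)" using e unfolding E_def by (simp add: mult_right_mono)
    finally show ?thesis .
  qed
  have cs': "- \<alpha> * inner E (a - w) \<le> \<epsilon> * \<alpha> * norm (a - w)"
    using mult_left_mono[OF cs, of \<alpha>] a by (simp add: algebra_simps)
  have comb: "(1-\<alpha>) * (gy + inner q (x - y)) + \<alpha> * (gy + inner q (a - y) + \<mu>/2 * (norm (a - y))\<^sup>2)
     + (1-\<alpha>) * (Hp + inner v (x - xp)) + \<alpha> * (Hp + inner v (a - xp))
     \<le> (1-\<alpha>) * gx + \<alpha> * ga + (1-\<alpha>) * Hx + \<alpha> * Ha"
  proof -
    have n: "0 \<le> 1-\<alpha>" "0 \<le> \<alpha>" using a by auto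
    show ?thesis
      using add_mono[OF add_mono[OF mult_left_mono[OF gx n(1)] mult_left_mono[OF ga n(2)]] add_mono[OF mult_left_mono[OF Hx n(1)] mult_left_mono[OF Ha n(2)]]]
      by linarith
  qed
  have comb2: "gy + Hp + (1-\<alpha>) * inner q (x - y) + \<alpha> * inner q (a - y) + \<alpha>*\<mu>/2 * (norm (a - y))\<^sup>2
     + (1-\<alpha>) * inner v (x - xp) + \<alpha> * inner v (a - xp)
     \<le> (1-\<alpha>) * gx + \<alpha> * ga + (1-\<alpha>) * Hx + \<alpha> * Ha"
    using comb by (simp add: algebra_simps)
  have quadi: "(gp'/\<alpha>) * inner (xp - y) (a - w) + gp'/(2*\<alpha>^2) * (norm (xp - y))\<^sup>2
     - \<alpha>*\<mu>/2 * (norm (a - y))\<^sup>2 + gp'/2 * (norm (a - w))\<^sup>2 \<le> (1-\<alpha>)*\<gamma>/2 * (norm (a - z))\<^sup>2"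
  proof -
    have gp2: "gp' = (1-\<alpha>)*\<gamma> + \<alpha>*\<mu>" using gp gp'_def by simp
    have S0: "\<alpha>*\<gamma> + gp' \<noteq> 0" using a g m gp2 by (smt (verit) mult_nonneg_nonneg mult_pos_pos)
    define X where "X = x - a"
    define Z where "Z = z - a"
    define W where "W = w - a"
    have Y: "(1/(\<alpha>*\<gamma> + gp')) *\<^sub>R ((\<alpha>*\<gamma>) *\<^sub>R Z + gp' *\<^sub>R X) = y - a"
    proof -
      have "(1/(\<alpha>*\<gamma> + gp')) *\<^sub>R ((\<alpha>*\<gamma>) *\<^sub>R Z + gp' *\<^sub>R X)
          = y - (1/(\<alpha>*\<gamma> + gp')) *\<^sub>R ((\<alpha>*\<gamma> + gp') *\<^sub>R a)"
        unfolding ydef gp'_def[symmetric] Z_def X_def by (simp add: algebra_simps scaleR_add_right)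
      also have "\<dots> = y - a" using S0 by simp
      finally show ?thesis .
    qed
    have XP: "((1-\<alpha>) *\<^sub>R X + \<alpha> *\<^sub>R W) = xp - a"
      unfolding xp X_def W_def by (simp add: algebra_simps)
    have Q: "(gp'/\<alpha>) * inner (((1-\<alpha>) *\<^sub>R X + \<alpha> *\<^sub>R W) - (1/(\<alpha>*\<gamma> + gp')) *\<^sub>R ((\<alpha>*\<gamma>) *\<^sub>R Z + gp' *\<^sub>R X)) (- W)
    + gp'/(2*\<alpha>^2) * (norm (((1-\<alpha>) *\<^sub>R X + \<alpha> *\<^sub>R W) - (1/(\<alpha>*\<gamma> + gp')) *\<^sub>R ((\<alpha>*\<gamma>) *\<^sub>R Z + gp' *\<^sub>R X)))\<^sup>2
    - \<alpha>*\<mu>/2 * (norm ((1/(\<alpha>*\<gamma> + gp')) *\<^sub>R ((\<alpha>*\<gamma>) *\<^sub>R Z + gp' *\<^sub>R X)))\<^sup>2 + gp'/2 * (norm W)\<^sup>2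
    \<le> (1-\<alpha>)*\<gamma>/2 * (norm Z)\<^sup>2"
      by (rule quad[OF a g m gp2])
    have r1: "xp - a - (y - a) = xp - y" by simp
    have r2: "- W = a - w" unfolding W_def by simp
    have r3: "norm (y - a) = norm (a - y)" by (rule norm_minus_commute)
    have r4: "norm W = norm (a - w)" unfolding W_def by (rule norm_minus_commute)
    have r5: "norm Z = norm (a - z)" unfolding Z_def by (rule norm_minus_commute)
    show ?thesis using Q unfolding Y XP r1 r2 r3 r4 r5 .
  qed
  have gpa: "gp'/\<alpha> = \<alpha> / \<eta>" "gp'/(2*\<alpha>^2) = 1/(2*\<eta>)"
    using a eta unfolding gp'_def by (simp_all add: field_simps power2_eq_square)
  have quadi2: "\<alpha> * ((1/\<eta>) * inner (xp - y) (a - w)) + 1/(2*\<eta>) * (norm (xp - y))\<^sup>2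
     - \<alpha>*\<mu>/2 * (norm (a - y))\<^sup>2 + gp'/2 * (norm (a - w))\<^sup>2 \<le> (1-\<alpha>)*\<gamma>/2 * (norm (a - z))\<^sup>2"
    using quadi unfolding gpa by simp
  have qv2: "\<alpha> * inner q (a - w) + \<alpha> * inner v (a - w) = \<alpha> * inner E (a - w) - \<alpha> * ((1/\<eta>) * inner (xp - y) (a - w))"
    using arg_cong[OF qv, of "\<lambda>t. \<alpha> * t"] by (simp add: algebra_simps)
  have goal: "gxp + Hp - (ga + Ha) + gp' / 2 * (norm (a - w))\<^sup>2
    \<le> (1 - \<alpha>) * gx + (1-\<alpha>) * Hx - (1-\<alpha>) * (ga + Ha) + (1-\<alpha>) * (\<gamma> / 2 * (norm (a - z))\<^sup>2) + \<epsilon> * \<alpha> * norm (a - w)"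
  proof -
    have "(1-\<alpha>) * (ga + Ha) = ga + Ha - \<alpha> * ga - \<alpha> * Ha" by (simp add: algebra_simps)
    moreover have "(1-\<alpha>) * (\<gamma> / 2 * (norm (a - z))\<^sup>2) = (1-\<alpha>)*\<gamma>/2 * (norm (a - z))\<^sup>2" by simp
    ultimately show ?thesis using comb2 gxp iq iv qv2 cs' quadi2 by linarith
  qed
  show ?thesis using goal unfolding gp'_def by (simp add: algebra_simps)
qed
theorem proposition3p4:
  fixes g h :: "real ^ 'n \<Rightarrow> real"
    and g' h' :: "real ^ 'n \<Rightarrow> real ^ 'n"
    and r :: "real ^ 'n \<Rightarrow> ereal"
    and \<mu> Lg Lh \<gamma>dec Llow Fstar :: real
    and xstar :: "real ^ 'n"
    and x z y :: "nat \<Rightarrow> real ^ 'n"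
    and \<eta> \<alpha> \<gamma> \<epsilon> :: "nat \<Rightarrow> real"
    and k :: nat
  defines "H \<equiv> (\<lambda>u. ereal (h u) + r u)"
  defines "F \<equiv> (\<lambda>u. ereal (g u) + H u)"
  assumes g_convex: "convex_on UNIV g"
    and mu_nonneg: "\<mu> \<ge> 0"
    and g_strong: "strongly_convex \<mu> g"
    and g_grad: "\<And>u. (g has_derivative (\<lambda>v. inner (g' u) v)) (at u)"
    and Lg_pos: "Lg > 0"
    and g_lip: "lipschitz_on Lg UNIV g'"
    and h_convex: "convex_on UNIV h"
    and h_grad: "\<And>u. (h has_derivative (\<lambda>v. inner (h' u) v)) (at u)"
    and h_lip: "lipschitz_on Lh UNIV h'"
    and r_proper: "proper_fun r"
    and r_closed: "closed_fun r"
    and r_convex: "convex_fun r"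
    and xstar_min: "F xstar = ereal Fstar" "\<And>u. F xstar \<le> F u"
    and \<gamma>dec: "0 < \<gamma>dec" "\<gamma>dec < 1"
    and Llow: "Llow > 0" "\<mu> \<le> Llow" "Llow \<le> Lg"
    and pos: "\<And>j. \<eta> j > 0" "\<And>j. \<alpha> j > 0" "\<And>j. \<gamma> j > 0" "\<And>j. \<epsilon> j \<ge> 0"
    and init: "x 0 = z 0" "x 0 \<in> ext_dom H" "\<gamma> 0 \<ge> \<mu>"
    and step_i: "\<And>j. \<gamma>dec / Lg < \<eta> j \<and> \<eta> j \<le> 1 / Llow"
    and step_ii: "\<And>j. \<gamma> (Suc j) = (\<alpha> j)\<^sup>2 / \<eta> j"
                 "\<And>j. (\<alpha> j)\<^sup>2 / \<eta> j = (1 - \<alpha> j) * \<gamma> j + \<alpha> j * \<mu>"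
    and step_iii: "\<And>j. y j = (1 / (\<alpha> j * \<gamma> j + \<gamma> (Suc j))) *\<^sub>R
                     ((\<alpha> j * \<gamma> j) *\<^sub>R z j + \<gamma> (Suc j) *\<^sub>R x j)"
    and step_iv: "\<And>j. dist0_le ((\<lambda>s. g' (y j) + (1 / \<eta> j) *\<^sub>R (x (Suc j) - y j) + s)
                          ` subdiff H (x (Suc j))) (\<epsilon> j)"
    and step_v: "\<And>j. g (x (Suc j)) \<le> g (y j) + inner (g' (y j)) (x (Suc j) - y j)
                     + 1 / (2 * \<eta> j) * (norm (x (Suc j) - y j))\<^sup>2"
    and step_vi: "\<And>j. z (Suc j) = x j + (1 / \<alpha> j) *\<^sub>R (x (Suc j) - x j)"
  shows "F (x (Suc k)) - ereal Fstar + ereal (\<gamma> (Suc k) / 2 * (norm (xstar - z (Suc k)))\<^sup>2)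
         \<le> ereal (1 - \<alpha> k) * (F (x k) - ereal Fstar + ereal (\<gamma> k / 2 * (norm (xstar - z k))\<^sup>2))
           + ereal (\<epsilon> k * \<alpha> k * norm (xstar - z (Suc k)))"
proof -
  have ag: "\<mu> \<le> \<gamma> j \<and> \<alpha> j \<le> 1" for j
  proof (induction j)
    case 0
    have g0: "\<mu> \<le> \<gamma> 0" using init by simp
    show ?case
    proof (rule conjI[OF g0], rule ccontr)
      assume "\<not> \<alpha> 0 \<le> 1"
      then have a1: "\<alpha> 0 > 1" by simp
      have "(\<alpha> 0)\<^sup>2 / \<eta> 0 \<le> \<mu>"
      proof -
        have "\<alpha> 0 * (\<gamma> 0 - \<mu>) \<ge> 1 * (\<gamma> 0 - \<mu>)" using a1 g0 by (intro mult_right_mono) auto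
        then show ?thesis using step_ii(2)[of 0] by (simp add: algebra_simps)
      qed
      moreover have "(\<alpha> 0)\<^sup>2 / \<eta> 0 > 1 / \<eta> 0"
        using a1 pos(1)[of 0] by (simp add: divide_strict_right_mono power_gt1)
      moreover have "1 / \<eta> 0 \<ge> Llow" using step_i[of 0] pos(1)[of 0] Llow(1)
        by (simp add: field_simps)
      ultimately show False using Llow(2) by linarith
    qed
  next
    case (Suc j)
    have gj: "\<mu> \<le> \<gamma> j" and aj: "\<alpha> j \<le> 1" using Suc by auto
    have g1: "\<mu> \<le> \<gamma> (Suc j)"
    proof -
      have "(1 - \<alpha> j) * (\<gamma> j - \<mu>) \<ge> 0" using gj aj by simp
      then show ?thesis using step_ii(1)[of j] step_ii(2)[of j] by (simp add: algebra_simps)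
    qed
    show ?case
    proof (rule conjI[OF g1], rule ccontr)
      let ?j = "Suc j"
      assume "\<not> \<alpha> ?j \<le> 1"
      then have a1: "\<alpha> ?j > 1" by simp
      have "(\<alpha> ?j)\<^sup>2 / \<eta> ?j \<le> \<mu>"
      proof -
        have "\<alpha> ?j * (\<gamma> ?j - \<mu>) \<ge> 1 * (\<gamma> ?j - \<mu>)" using a1 g1 by (intro mult_right_mono) auto
        then show ?thesis using step_ii(2)[of ?j] by (simp add: algebra_simps)
      qed
      moreover have "(\<alpha> ?j)\<^sup>2 / \<eta> ?j > 1 / \<eta> ?j"
        using a1 pos(1)[of ?j] by (simp add: divide_strict_right_mono power_gt1)
      moreover have "1 / \<eta> ?j \<ge> Llow" using step_i[of ?j] pos(1)[of ?j] Llow(1)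
        by (simp add: field_simps)
      ultimately show False using Llow(2) by linarith
    qed
  qed
  have rninf: "r u \<noteq> -\<infinity>" for u using r_proper unfolding proper_fun_def by auto
  have Hninf: "H u \<noteq> -\<infinity>" for u using rninf unfolding H_def by simp
  have sub_ne: "subdiff H (x (Suc j)) \<noteq> {}" for j
    using step_iv[of j] unfolding dist0_le_def by auto
  have fin_sub: "\<bar>H (x (Suc j))\<bar> \<noteq> \<infinity>" for j
    using sub_ne[of j] unfolding subdiff_def by (auto split: if_splits)
  have finH: "\<bar>H (x j)\<bar> \<noteq> \<infinity>" for j
  proof (cases j)
    case 0
    then show ?thesis using init(2) Hninf[of "x 0"] unfolding ext_dom_def by auto
  next
    case (Suc i)
    then show ?thesis using fin_sub[of i] by simp
  qed
  define Hr where "Hr u = real_of_ereal (H u)" for u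
  have HrH: "\<bar>H u\<bar> \<noteq> \<infinity> \<Longrightarrow> H u = ereal (Hr u)" for u
    unfolding Hr_def by (cases "H u") auto
  have Hxs: "H xstar = ereal (Fstar - g xstar)"
    using xstar_min(1) unfolding F_def by (cases "H xstar") auto
  have Hxs': "Hr xstar = Fstar - g xstar" unfolding Hr_def Hxs by simp
  have finHxs: "\<bar>H xstar\<bar> \<noteq> \<infinity>" using Hxs by simp
  define a where "a = xstar"
  define xk where "xk = x k"
  define xp where "xp = x (Suc k)"
  define zk where "zk = z k"
  define w where "w = z (Suc k)"
  define yk where "yk = y k"
  have A: "0 < \<alpha> k" "\<alpha> k \<le> 1" using pos(2) ag by auto
  have strong: "g u + inner (g' u) (b - u) + \<mu>/2 * (norm (b - u))\<^sup>2 \<le> g b" for u b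
    using strong_grad[of g \<mu> g' u b] g_strong g_grad unfolding strongly_convex_def by blast
  have gx: "g yk + inner (g' yk) (xk - yk) \<le> g xk"
    using strong[of yk xk] mu_nonneg by (smt (verit) mult_nonneg_nonneg zero_le_power2 divide_nonneg_pos)
  have ga: "g yk + inner (g' yk) (a - yk) + \<mu>/2 * (norm (a - yk))\<^sup>2 \<le> g a"
    using strong[of yk a] .
  have gxp: "g xp \<le> g yk + inner (g' yk) (xp - yk) + 1 / (2 * \<eta> k) * (norm (xp - yk))\<^sup>2"
    using step_v[of k] unfolding xp_def yk_def .
  have finHxp: "\<bar>H xp\<bar> \<noteq> \<infinity>" unfolding xp_def by (rule fin_sub)
  have real_ineq_e: "g xp + Hr xp - (g a + Hr a) + (\<alpha> k^2/\<eta> k) / 2 * (norm (a - w))\<^sup>2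
    \<le> (1 - \<alpha> k) * (g xk + Hr xk - (g a + Hr a) + \<gamma> k / 2 * (norm (a - zk))\<^sup>2) + e * \<alpha> k * norm (a - w)"
    if e: "e > \<epsilon> k" for e
  proof -
    define S where "S = (\<lambda>s. g' (y k) + (1 / \<eta> k) *\<^sub>R (x (Suc k) - y k) + s) ` subdiff H (x (Suc k))"
    have Sne: "S \<noteq> {}" and Sd: "infdist 0 S \<le> \<epsilon> k" using step_iv[of k] unfolding dist0_le_def S_def by auto
    have "(INF s\<in>S. dist 0 s) < e" using Sd e infdist_notempty[OF Sne, of 0] by simp
    then obtain s where sS: "s \<in> S" and sd: "dist 0 s < e"
    proof -
      have "bdd_below ((\<lambda>s. dist 0 s) ` S)" by (rule bdd_belowI[of _ 0]) auto
      then show ?thesis using cINF_less_iff[OF Sne, of "\<lambda>s. dist 0 s" e] \<open>(INF s\<in>S. dist 0 s) < e\<close> that by auto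
    qed
    then obtain v where v: "v \<in> subdiff H xp" and sv: "s = g' yk + (1 / \<eta> k) *\<^sub>R (xp - yk) + v"
      unfolding S_def xp_def yk_def by auto
    have vnorm: "norm (g' yk + (1 / \<eta> k) *\<^sub>R (xp - yk) + v) \<le> e" using sd sv by simp
    have vsub: "H u \<ge> H xp + ereal (inner v (u - xp))" for u
      using v unfolding subdiff_def by (auto split: if_splits)
    have Hx: "Hr xp + inner v (xk - xp) \<le> Hr xk"
      using vsub[of xk] HrH[OF finHxp] HrH[OF finH[of k]] unfolding xk_def by simp
    have Ha: "Hr xp + inner v (a - xp) \<le> Hr a"
      using vsub[of a] HrH[OF finHxp] HrH[OF finHxs] unfolding a_def by simp
    have yd: "yk = (1/(\<alpha> k*\<gamma> k + \<alpha> k^2/\<eta> k)) *\<^sub>R ((\<alpha> k*\<gamma> k) *\<^sub>R zk + (\<alpha> k^2/\<eta> k) *\<^sub>R xk)"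
      using step_iii[of k] step_ii(1)[of k] unfolding yk_def zk_def xk_def by simp
    have wd: "w = xk + (1/\<alpha> k) *\<^sub>R (xp - xk)" using step_vi[of k] unfolding w_def xk_def xp_def .
    show ?thesis
      by (rule core[OF A pos(3)[of k] mu_nonneg pos(1)[of k] step_ii(2)[of k] yd wd gx ga gxp Hx Ha vnorm])
  qed
  have real_ineq: "g xp + Hr xp - (g a + Hr a) + (\<alpha> k^2/\<eta> k) / 2 * (norm (a - w))\<^sup>2
    \<le> (1 - \<alpha> k) * (g xk + Hr xk - (g a + Hr a) + \<gamma> k / 2 * (norm (a - zk))\<^sup>2) + \<epsilon> k * \<alpha> k * norm (a - w)"
  proof (rule field_le_epsilon)
    fix t :: real assume t: "0 < t"
    define c where "c = \<alpha> k * norm (a - w)"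
    have c0: "c \<ge> 0" using A unfolding c_def by simp
    define e where "e = \<epsilon> k + t / (c + 1)"
    have "e > \<epsilon> k" using t c0 unfolding e_def by simp
    note R = real_ineq_e[OF this]
    have "e * \<alpha> k * norm (a - w) = \<epsilon> k * \<alpha> k * norm (a - w) + t * (c / (c + 1))"
      unfolding e_def c_def using c0 by (simp add: field_simps)
    moreover have "t * (c / (c + 1)) \<le> t"
    proof -
      have "c / (c + 1) \<le> 1" using c0 by simp
      then show ?thesis using t by (simp add: mult_left_le del: times_divide_eq_right)
    qed
    ultimately show "g xp + Hr xp - (g a + Hr a) + (\<alpha> k^2/\<eta> k) / 2 * (norm (a - w))\<^sup>2
      \<le> (1 - \<alpha> k) * (g xk + Hr xk - (g a + Hr a) + \<gamma> k / 2 * (norm (a - zk))\<^sup>2) + \<epsilon> k * \<alpha> k * norm (a - w) + t"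
      using R by linarith
  qed
  have Fxp: "F (x (Suc k)) = ereal (g xp + Hr xp)" using HrH[OF finHxp] unfolding F_def xp_def by simp
  have Fxk: "F (x k) = ereal (g xk + Hr xk)" using HrH[OF finH[of k]] unfolding F_def xk_def by simp
  have Fs: "Fstar = g a + Hr a" using Hxs' unfolding a_def by simp
  show ?thesis
    unfolding Fxp Fxk using real_ineq
    by (simp add: Fs a_def w_def zk_def step_ii(1))
qed

end
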